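(* For a $d$-dimensional state ensemble $\Omega=\{(p_j,\rho_j)\}_{j=0}^{k-1}$, the optimal discrimination probability $P_{\mathrm{suc}}(\Omega)=\max_{\text{POVMs }\{E_j\}}\sum_j p_j\mathrm{tr}(E_j\rho_j)$ can be achieved by quantum state discrimination via incoherent operations; i.e. $P_{\mathrm{suc}}(\Omega)=\widetilde{P}_{\mathrm{suc,IO}}(\Omega)=\widetilde{P}_{\mathrm{suc,MIO}}(\Omega)$.
   Context: Quantum state discrimination via free operations: for a set of free operations $\mathcal{O}$, $\widetilde{P}_{\mathrm{suc},\mathcal{O}}(\Omega)=\sup\sum_j p_j\mathrm{tr}[\mathcal{N}_{A\to BA'}(\rho_j)(|j\rangle\langle j|_B\otimes I_{A'})]$ over channels $\mathcal{N}_{A\to BA'}\in\mathcal{O}$, with $\dim B=k$, $A'\cong A$, and $\{|j\rangle\}$ the computational basis (i.e. apply $\mathcal{N}$ then measure $B$ in the computational basis). Incoherent states are diagonal in the computational basis. IO (incoherent operations) are channels with a Kraus decomposition $\{K_n\}$ such that each $K_n\rho K_n^\dagger$ is incoherent (up to normalization) for every incoherent $\rho$; MIO are channels mapping incoherent states to incoherent states; IO $\subsetneq$ MIO. *)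

theory Defs
  imports Complex_Main "Jordan_Normal_Form.Matrix"
begin

definition adj :: "complex mat \<Rightarrow> complex mat" where
  "adj A = mat (dim_col A) (dim_row A) (\<lambda>(i,j). cnj (A $$ (j,i)))"

definition mtrace :: "complex mat \<Rightarrow> complex" where
  "mtrace A = (\<Sum>i<dim_row A. A $$ (i,i))"

definition msum :: "nat \<Rightarrow> nat \<Rightarrow> ('i \<Rightarrow> complex mat) \<Rightarrow> 'i set \<Rightarrow> complex mat" where
  "msum r c f I = mat r c (\<lambda>ij. \<Sum>x\<in>I. f x $$ ij)"

definition psd :: "nat \<Rightarrow> complex mat \<Rightarrow> bool" where
  "psd n A \<longleftrightarrow> A \<in> carrier_mat n n \<and>
     (\<forall>v \<in> carrier_vec n. let q = map_vec cnj v \<bullet> (A *\<^sub>v v) in Im q = 0 \<and> 0 \<le> Re q)"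

definition density :: "nat \<Rightarrow> complex mat \<Rightarrow> bool" where
  "density n \<rho> \<longleftrightarrow> psd n \<rho> \<and> mtrace \<rho> = 1"

definition incoherent :: "nat \<Rightarrow> complex mat \<Rightarrow> bool" where
  "incoherent n \<rho> \<longleftrightarrow> density n \<rho> \<and> diagonal_mat \<rho>"

definition ensemble :: "nat \<Rightarrow> nat \<Rightarrow> (nat \<Rightarrow> real) \<Rightarrow> (nat \<Rightarrow> complex mat) \<Rightarrow> bool" where
  "ensemble d k p \<rho> \<longleftrightarrow> (\<forall>j<k. 0 \<le> p j \<and> density d (\<rho> j)) \<and> (\<Sum>j<k. p j) = 1"

definition povm :: "nat \<Rightarrow> nat \<Rightarrow> (nat \<Rightarrow> complex mat) \<Rightarrow> bool" where
  "povm d k E \<longleftrightarrow> (\<forall>j<k. psd d (E j)) \<and> msum d d E {..<k} = 1\<^sub>m d"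

definition Psuc :: "nat \<Rightarrow> nat \<Rightarrow> (nat \<Rightarrow> real) \<Rightarrow> (nat \<Rightarrow> complex mat) \<Rightarrow> real" where
  "Psuc d k p \<rho> = Sup {(\<Sum>j<k. p j * Re (mtrace (E j * \<rho> j))) | E. povm d k E}"

definition is_kraus :: "nat \<Rightarrow> nat \<Rightarrow> nat \<Rightarrow> (nat \<Rightarrow> complex mat) \<Rightarrow> bool" where
  "is_kraus n m N K \<longleftrightarrow> (\<forall>i<N. K i \<in> carrier_mat m n) \<and>
      msum n n (\<lambda>i. adj (K i) * K i) {..<N} = 1\<^sub>m n"

definition kraus_map :: "nat \<Rightarrow> nat \<Rightarrow> (nat \<Rightarrow> complex mat) \<Rightarrow> complex mat \<Rightarrow> complex mat" where
  "kraus_map m N K \<rho> = msum m m (\<lambda>i. K i * \<rho> * adj (K i)) {..<N}"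

definition channel :: "nat \<Rightarrow> nat \<Rightarrow> (complex mat \<Rightarrow> complex mat) \<Rightarrow> bool" where
  "channel n m \<Phi> \<longleftrightarrow> (\<exists>N K. is_kraus n m N K \<and> (\<forall>\<rho> \<in> carrier_mat n n. \<Phi> \<rho> = kraus_map m N K \<rho>))"

definition MIO :: "nat \<Rightarrow> nat \<Rightarrow> (complex mat \<Rightarrow> complex mat) \<Rightarrow> bool" where
  "MIO n m \<Phi> \<longleftrightarrow> channel n m \<Phi> \<and> (\<forall>\<rho>. incoherent n \<rho> \<longrightarrow> incoherent m (\<Phi> \<rho>))"

definition IO :: "nat \<Rightarrow> nat \<Rightarrow> (complex mat \<Rightarrow> complex mat) \<Rightarrow> bool" where
  "IO n m \<Phi> \<longleftrightarrow> (\<exists>N K. is_kraus n m N K \<and> (\<forall>\<rho> \<in> carrier_mat n n. \<Phi> \<rho> = kraus_map m N K \<rho>) \<and>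
      (\<forall>i<N. \<forall>\<rho>. incoherent n \<rho> \<longrightarrow> diagonal_mat (K i * \<rho> * adj (K i))))"

text \<open>Output system B (dim k) tensor A' (dim d); basis vector |j>|a> has index j*d + a.
  projB d k j is the projector |j><j|_B tensor I_{A'}.\<close>
definition projB :: "nat \<Rightarrow> nat \<Rightarrow> nat \<Rightarrow> complex mat" where
  "projB d k j = mat (k*d) (k*d) (\<lambda>(r,c). if r = c \<and> r div d = j then 1 else 0)"

definition Ptilde ::
  "(nat \<Rightarrow> nat \<Rightarrow> (complex mat \<Rightarrow> complex mat) \<Rightarrow> bool) \<Rightarrow>
   nat \<Rightarrow> nat \<Rightarrow> (nat \<Rightarrow> real) \<Rightarrow> (nat \<Rightarrow> complex mat) \<Rightarrow> real" where
  "Ptilde Free d k p \<rho> = Sup {(\<Sum>j<k. p j * Re (mtrace (\<Phi> (\<rho> j) * projB d k j))) | \<Phi>. Free d (k*d) \<Phi>}"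

end

theory Submission
  imports Defs
begin


definition qf :: "nat \<Rightarrow> (nat \<Rightarrow> nat \<Rightarrow> complex) \<Rightarrow> (nat \<Rightarrow> complex) \<Rightarrow> complex" where
  "qf n A v = (\<Sum>a<n. \<Sum>b<n. cnj (v a) * A a b * v b)"

definition psdf :: "nat \<Rightarrow> (nat \<Rightarrow> nat \<Rightarrow> complex) \<Rightarrow> bool" where
  "psdf n A \<longleftrightarrow> (\<forall>v. Im (qf n A v) = 0 \<and> 0 \<le> Re (qf n A v))"

lemma qf_vec:
  assumes "A \<in> carrier_mat n n" "v \<in> carrier_vec n"
  shows "map_vec cnj v \<bullet> (A *\<^sub>v v) = qf n (\<lambda>a b. A $$ (a,b)) (\<lambda>i. v $ i)"
  using assms unfolding qf_def scalar_prod_def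
  by (auto simp: mult_mat_vec_def scalar_prod_def sum_distrib_left mult.assoc intro!: sum.cong)

lemma qf_cong:
  assumes "\<And>i. i < n \<Longrightarrow> v i = w i"
  shows "qf n A v = qf n A w"
  using assms unfolding qf_def by auto

lemma psd_iff: "psd n A \<longleftrightarrow> A \<in> carrier_mat n n \<and> psdf n (\<lambda>a b. A $$ (a,b))"
proof
  assume h: "psd n A"
  hence A: "A \<in> carrier_mat n n" by (simp add: psd_def)
  show "A \<in> carrier_mat n n \<and> psdf n (\<lambda>a b. A $$ (a,b))"
  proof (intro conjI A)
    show "psdf n (\<lambda>a b. A $$ (a,b))" unfolding psdf_def
    proof
      fix v :: "nat \<Rightarrow> complex"
      have "vec n v \<in> carrier_vec n" by simp
      with h have "Im (map_vec cnj (vec n v) \<bullet> (A *\<^sub>v vec n v)) = 0 \<and> 0 \<le> Re (map_vec cnj (vec n v) \<bullet> (A *\<^sub>v vec n v))"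
        unfolding psd_def Let_def by blast
      moreover have "map_vec cnj (vec n v) \<bullet> (A *\<^sub>v vec n v) = qf n (\<lambda>a b. A $$ (a,b)) v"
        by (subst qf_vec[OF A], simp, rule qf_cong, simp)
      ultimately show "Im (qf n (\<lambda>a b. A $$ (a,b)) v) = 0 \<and> 0 \<le> Re (qf n (\<lambda>a b. A $$ (a,b)) v)" by simp
    qed
  qed
next
  assume h: "A \<in> carrier_mat n n \<and> psdf n (\<lambda>a b. A $$ (a,b))"
  then show "psd n A" unfolding psd_def Let_def psdf_def
    by (auto simp: qf_vec)
qed

lemma qf_supp:
  assumes "S \<subseteq> {..<n}" "\<And>x. x \<notin> S \<Longrightarrow> v x = 0"
  shows "qf n A v = (\<Sum>a\<in>S. \<Sum>b\<in>S. cnj (v a) * A a b * v b)"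
proof -
  have fS: "finite S" using assms(1) finite_subset by blast
  have "qf n A v = (\<Sum>a\<in>S. \<Sum>b<n. cnj (v a) * A a b * v b)"
    unfolding qf_def by (rule sum.mono_neutral_right, auto simp: assms)
  also have "\<dots> = (\<Sum>a\<in>S. \<Sum>b\<in>S. cnj (v a) * A a b * v b)"
    by (rule sum.cong[OF refl], rule sum.mono_neutral_right, auto simp: assms fS)
  finally show ?thesis .
qed

lemma qf_two:
  assumes "a < n" "b < n" "a \<noteq> b"
  shows "qf n A (\<lambda>x. (if x = a then \<alpha> else 0) + (if x = b then \<beta> else 0)) =
     cnj \<alpha> * A a a * \<alpha> + cnj \<alpha> * A a b * \<beta> + cnj \<beta> * A b a * \<alpha> + cnj \<beta> * A b b * \<beta>"
  using assms by (subst qf_supp[where S="{a,b}"], auto)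

lemma qf_one:
  assumes "a < n"
  shows "qf n A (\<lambda>x. if x = a then \<alpha> else 0) = cnj \<alpha> * A a a * \<alpha>"
  using assms by (subst qf_supp[where S="{a}"], auto)

lemma psdf_diag:
  assumes "psdf n A" "a < n"
  shows "Im (A a a) = 0 \<and> 0 \<le> Re (A a a)"
proof -
  have "Im (qf n A (\<lambda>x. if x = a then 1 else 0)) = 0 \<and> 0 \<le> Re (qf n A (\<lambda>x. if x = a then 1 else 0))"
    using assms(1) unfolding psdf_def by blast
  then show ?thesis unfolding qf_one[OF assms(2)] by simp
qed

lemma psdf_herm:
  assumes "psdf n A" "a < n" "b < n"
  shows "A b a = cnj (A a b)"
proof (cases "a = b")
  case True
  then show ?thesis using psdf_diag[OF assms(1,2)] by (simp add: complex_eq_iff)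
next
  case False
  have d1: "Im (A a a) = 0" "Im (A b b) = 0" using psdf_diag assms by auto
  have "Im (qf n A (\<lambda>x. (if x = a then 1 else 0) + (if x = b then 1 else 0))) = 0"
    using assms(1) unfolding psdf_def by blast
  then have h1: "Im (A a b) + Im (A b a) = 0" using d1 unfolding qf_two[OF assms(2,3) False] by simp
  have "Im (qf n A (\<lambda>x. (if x = a then 1 else 0) + (if x = b then \<i> else 0))) = 0"
    using assms(1) unfolding psdf_def by blast
  then have h2: "Re (A a b) - Re (A b a) = 0" using d1 unfolding qf_two[OF assms(2,3) False] by simp
  show ?thesis using h1 h2 by (simp add: complex_eq_iff)
qed

lemma psdf_zero_row:
  assumes "psdf n A" "t < n" "A t t = 0" "b < n"
  shows "A t b = 0"
proof (rule ccontr)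
  assume nz: "A t b \<noteq> 0"
  then have tb: "t \<noteq> b" using assms by auto
  define z where "z = A t b"
  have bt: "A b t = cnj z" using psdf_herm[OF assms(1,2,4)] z_def by simp
  have bb: "Im (A b b) = 0" using psdf_diag assms by auto
  define s :: real where "s = (Re (A b b) + 1) / (2 * (cmod z)^2)"
  have zpos: "(cmod z)^2 > 0" using nz z_def by simp
  have "0 \<le> Re (qf n A (\<lambda>x. (if x = t then - (of_real s * z) else 0) + (if x = b then 1 else 0)))"
    using assms(1) unfolding psdf_def by blast
  also have "Re (qf n A (\<lambda>x. (if x = t then - (of_real s * z) else 0) + (if x = b then 1 else 0)))
     = - 2 * s * (cmod z)^2 + Re (A b b)"
    unfolding qf_two[OF assms(2,4) tb] assms(3) bt
    by (simp add: cmod_def power2_eq_square algebra_simps flip: z_def)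
  also have "\<dots> = -1" using zpos unfolding s_def by (simp add: field_simps)
  finally show False by simp
qed

lemma sd1: "t < (n::nat) \<Longrightarrow> (\<Sum>b<n. (f b::complex) * (if b = t then \<mu> else 0)) = f t * \<mu>"
proof -
  assume "t < n"
  have "(\<Sum>b<n. (f b::complex) * (if b = t then \<mu> else 0)) = (\<Sum>b<n. if b = t then f b * \<mu> else 0)"
    by (rule sum.cong, auto)
  also have "\<dots> = f t * \<mu>" using \<open>t < n\<close> by simp
  finally show ?thesis .
qed

lemma sd2: "t < (n::nat) \<Longrightarrow> (\<Sum>a<n. (if a = t then \<mu> else 0) * (f a::complex)) = \<mu> * f t"
  using sd1[of t n f \<mu>] by (simp add: mult.commute)

lemma sd3: "t < (n::nat) \<Longrightarrow> (\<Sum>a<n. (if a = t then \<mu> else 0) * (f a::complex) * (if a = t then \<nu> else 0)) = \<mu> * f t * \<nu>"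
proof -
  assume "t < n"
  have "(\<Sum>a<n. (if a = t then \<mu> else 0) * (f a::complex) * (if a = t then \<nu> else 0)) = (\<Sum>b<n. if b = t then \<mu> * f b * \<nu> else 0)"
    by (rule sum.cong, auto)
  also have "\<dots> = \<mu> * f t * \<nu>" using \<open>t < n\<close> by simp
  finally show ?thesis .
qed

lemma qf_add_delta:
  assumes "t < n"
  shows "qf n A (\<lambda>x. v x + (if x = t then \<mu> else 0)) =
    qf n A v + (\<Sum>a<n. cnj (v a) * A a t) * \<mu> + cnj \<mu> * (\<Sum>b<n. A t b * v b) + cnj \<mu> * A t t * \<mu>"
proof -
  have "qf n A (\<lambda>x. v x + (if x = t then \<mu> else 0)) =
     (\<Sum>a<n. \<Sum>b<n. cnj (v a) * A a b * v b + cnj (v a) * A a b * (if b = t then \<mu> else 0)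
        + (if a = t then cnj \<mu> else 0) * A a b * v b + (if a = t then cnj \<mu> else 0) * A a b * (if b = t then \<mu> else 0))"
    unfolding qf_def by (rule sum.cong[OF refl], rule sum.cong[OF refl], simp add: algebra_simps)
  also have "\<dots> = qf n A v + (\<Sum>a<n. cnj (v a) * A a t) * \<mu> + cnj \<mu> * (\<Sum>b<n. A t b * v b) + cnj \<mu> * A t t * \<mu>"
  proof -
    have h2: "(\<Sum>a<n. \<Sum>b<n. cnj (v a) * A a b * (if b = t then \<mu> else 0)) = (\<Sum>a<n. cnj (v a) * A a t) * \<mu>"
      using assms by (simp add: sd1 sum_distrib_right)
    have h3: "(\<Sum>a<n. \<Sum>b<n. (if a = t then cnj \<mu> else 0) * A a b * v b) = cnj \<mu> * (\<Sum>b<n. A t b * v b)"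
    proof -
      have "(\<Sum>a<n. \<Sum>b<n. (if a = t then cnj \<mu> else 0) * A a b * v b) = (\<Sum>a<n. (if a = t then cnj \<mu> else 0) * (\<Sum>b<n. A a b * v b))"
        by (simp add: sum_distrib_left mult.assoc)
      also have "\<dots> = cnj \<mu> * (\<Sum>b<n. A t b * v b)" using assms by (rule sd2)
      finally show ?thesis .
    qed
    have h4: "(\<Sum>a<n. \<Sum>b<n. (if a = t then cnj \<mu> else 0) * A a b * (if b = t then \<mu> else 0)) = cnj \<mu> * A t t * \<mu>"
    proof -
      have "(\<Sum>a<n. \<Sum>b<n. (if a = t then cnj \<mu> else 0) * A a b * (if b = t then \<mu> else 0)) = (\<Sum>a<n. (if a = t then cnj \<mu> else 0) * (A a t * \<mu>))"
        using assms by (simp add: sd1 mult.assoc flip: sum_distrib_left)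
      also have "\<dots> = cnj \<mu> * (A t t * \<mu>)" using assms by (rule sd2)
      finally show ?thesis by (simp add: mult.assoc)
    qed
    show ?thesis unfolding sum.distrib qf_def h2 h3 h4 by simp
  qed
  finally show ?thesis .
qed

lemma sum_upd_Suc:
  "(\<Sum>r<Suc m. (w(m := u)) r a * cnj ((w(m := u)) r b)) = (\<Sum>r<m. w r a * cnj (w r b)) + u a * cnj (u b)"
  by (simp add: sum.lessThan_Suc)

lemma decomp_aux:
  "m \<le> n \<Longrightarrow> psdf n E \<Longrightarrow> (\<forall>a<n. \<forall>b<n. (a < n - m \<or> b < n - m) \<longrightarrow> E a b = 0) \<Longrightarrow>
   \<exists>w. \<forall>a<n. \<forall>b<n. E a b = (\<Sum>r<m. w r a * cnj (w r b))"
proof (induction m arbitrary: E)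
  case 0
  then show ?case by auto
next
  case (Suc m)
  define t where "t = n - Suc m"
  have tn: "t < n" and nm: "n - m = Suc t" using Suc.prems(1) unfolding t_def by auto
  have ps: "psdf n E" by fact
  have z: "\<And>a b. a < n \<Longrightarrow> b < n \<Longrightarrow> a < t \<or> b < t \<Longrightarrow> E a b = 0"
    using Suc.prems(3) unfolding t_def by auto
  have herm: "\<And>a b. a < n \<Longrightarrow> b < n \<Longrightarrow> E b a = cnj (E a b)" using psdf_herm[OF ps] by blast
  have hA: "\<And>a. a < n \<Longrightarrow> E a t = cnj (E t a)" using herm tn by blast
  have hB: "cnj (E a t) = E t a" if "a < n" for a
  proof -
    have "E t a = cnj (E a t)" using herm[OF that tn] .
    then show ?thesis by simp
  qed
  show ?case
  proof (cases "E t t = 0")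
    case True
    have row: "\<And>b. b < n \<Longrightarrow> E t b = 0" using psdf_zero_row[OF ps tn True] by blast
    have col: "\<And>b. b < n \<Longrightarrow> E b t = 0"
    proof -
      fix b assume "b < n"
      then have "E b t = cnj (E t b)" using herm tn by blast
      then show "E b t = 0" using row \<open>b < n\<close> by simp
    qed
    have "\<forall>a<n. \<forall>b<n. (a < n - m \<or> b < n - m) \<longrightarrow> E a b = 0"
    proof (intro allI impI)
      fix a b assume ab: "a < n" "b < n" "a < n - m \<or> b < n - m"
      then have "a < t \<or> b < t \<or> a = t \<or> b = t" using nm by auto
      then show "E a b = 0"
      proof (elim disjE)
        assume "a < t" then show ?thesis using z ab by blast
      next
        assume "b < t" then show ?thesis using z ab by blast
      next
        assume "a = t" then show ?thesis using row ab by blast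
      next
        assume "b = t" then show ?thesis using col ab by blast
      qed
    qed
    then obtain w where w: "\<forall>a<n. \<forall>b<n. E a b = (\<Sum>r<m. w r a * cnj (w r b))"
      using Suc.IH[OF _ ps] Suc.prems(1) by auto
    show ?thesis
      by (rule exI[of _ "w(m := (\<lambda>_. 0))"], unfold sum_upd_Suc, simp add: w)
  next
    case False
    define e where "e = E t t"
    have e_real: "Im e = 0" and e_nn: "0 \<le> Re e" using psdf_diag[OF ps tn] e_def by auto
    have e_pos: "0 < Re e" using e_real e_nn False e_def by (metis complex_eq_iff less_eq_real_def zero_complex.sel)
    define c where "c = sqrt (Re e)"
    have c_pos: "c > 0" using e_pos c_def by simp
    have e_c: "e = of_real c * of_real c" using e_real e_nn c_def
      by (simp add: complex_eq_iff flip: of_real_mult)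
    define u where "u a = E a t / of_real c" for a
    define E' where "E' a b = E a b - u a * cnj (u b)" for a b
    have ps': "psdf n E'"
      unfolding psdf_def
    proof
      fix v :: "nat \<Rightarrow> complex"
      define S where "S = (\<Sum>b<n. E t b * v b)"
      define \<mu> where "\<mu> = - S / e"
      have s1: "(\<Sum>a<n. cnj (v a) * E a t) = cnj S"
        unfolding S_def cnj_sum by (rule sum.cong, auto simp: hA)
      have s2: "(\<Sum>a<n. cnj (v a) * u a) = cnj S / of_real c"
        unfolding u_def using s1 by (simp add: sum_divide_distrib[symmetric])
      have s3: "(\<Sum>b<n. cnj (u b) * v b) = S / of_real c"
        unfolding u_def S_def by (simp add: sum_divide_distrib[symmetric] hB)
      have "qf n E' v = (\<Sum>a<n. \<Sum>b<n. cnj (v a) * E a b * v b - (cnj (v a) * u a) * (cnj (u b) * v b))"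
        unfolding qf_def E'_def by (rule sum.cong[OF refl], rule sum.cong[OF refl], simp add: algebra_simps)
      also have "\<dots> = qf n E v - (\<Sum>a<n. cnj (v a) * u a) * (\<Sum>b<n. cnj (u b) * v b)"
        unfolding qf_def sum_product sum_subtractf ..
      also have "\<dots> = qf n E v - cnj S * S / e" unfolding s2 s3 e_c by simp
      also have "\<dots> = qf n E (\<lambda>x. v x + (if x = t then \<mu> else 0))"
      proof -
        have ce: "cnj e = e" using e_real by (simp add: complex_eq_iff)
        have en: "e \<noteq> 0" using False e_def by simp
        have cm: "cnj \<mu> = - cnj S / e" unfolding \<mu>_def using ce by simp
        have "qf n E (\<lambda>x. v x + (if x = t then \<mu> else 0)) = qf n E v + cnj S * \<mu> + cnj \<mu> * S + cnj \<mu> * e * \<mu>"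
          unfolding qf_add_delta[OF tn] s1 S_def[symmetric] e_def[symmetric] ..
        also have "\<dots> = qf n E v - cnj S * S / e" unfolding cm unfolding \<mu>_def using en
          by (simp add: field_simps power2_eq_square)
        finally show ?thesis by simp
      qed
      finally have "qf n E' v = qf n E (\<lambda>x. v x + (if x = t then \<mu> else 0))" .
      then show "Im (qf n E' v) = 0 \<and> 0 \<le> Re (qf n E' v)" using ps unfolding psdf_def by simp
    qed
    have "\<forall>a<n. \<forall>b<n. (a < n - m \<or> b < n - m) \<longrightarrow> E' a b = 0"
    proof (intro allI impI)
      fix a b assume ab: "a < n" "b < n" "a < n - m \<or> b < n - m"
      then have "a < t \<or> b < t \<or> a = t \<or> b = t" using nm by auto
      then show "E' a b = 0"
      proof (elim disjE)
        assume "a < t" then show ?thesis using z ab tn unfolding E'_def u_def by simp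
      next
        assume "b < t" then show ?thesis using z ab tn unfolding E'_def u_def by simp
      next
        assume at: "a = t"
        have "cnj (E b t / of_real c) = E t b / of_real c" using hB[OF ab(2)] by simp
        note cc = this
        have "E' a b = E t b - e / of_real c * (E t b / of_real c)" unfolding E'_def u_def at e_def cc by (rule refl)
        also have "\<dots> = 0" unfolding e_c using c_pos by (simp add: field_simps)
        finally show ?thesis .
      next
        assume bt: "b = t"
        have ce: "cnj e = e" using e_real by (simp add: complex_eq_iff)
        have "E' a b = E a t - E a t / of_real c * (e / of_real c)" unfolding E'_def u_def bt e_def[symmetric]
          using ce by simp
        also have "\<dots> = 0" unfolding e_c using c_pos by (simp add: field_simps)
        finally show ?thesis .
      qed
    qed
    then obtain w where w: "\<forall>a<n. \<forall>b<n. E' a b = (\<Sum>r<m. w r a * cnj (w r b))"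
      using Suc.IH[OF _ ps'] Suc.prems(1) by auto
    show ?thesis
      by (rule exI[of _ "w(m := u)"], unfold sum_upd_Suc, auto simp: w[rule_format, symmetric] E'_def)
  qed
qed




lemma psd_decomp:
  assumes "psd d E"
  shows "\<exists>w. \<forall>a<d. \<forall>b<d. E $$ (a,b) = (\<Sum>r<d. w r a * cnj (w r b))"
  using decomp_aux[of d d "\<lambda>a b. E $$ (a,b)"] assms unfolding psd_iff by auto

lemma sum_swap4:
  "(\<Sum>a\<in>A. \<Sum>b\<in>B. \<Sum>i\<in>I. \<Sum>s\<in>S. h a b i s) = (\<Sum>i\<in>I. \<Sum>s\<in>S. \<Sum>a\<in>A. \<Sum>b\<in>B. h a b i s)"
proof -
  have "(\<Sum>a\<in>A. \<Sum>b\<in>B. \<Sum>i\<in>I. \<Sum>s\<in>S. h a b i s) = (\<Sum>a\<in>A. \<Sum>i\<in>I. \<Sum>b\<in>B. \<Sum>s\<in>S. h a b i s)"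
    by (rule sum.cong[OF refl], rule sum.swap)
  also have "\<dots> = (\<Sum>i\<in>I. \<Sum>a\<in>A. \<Sum>b\<in>B. \<Sum>s\<in>S. h a b i s)" by (rule sum.swap)
  also have "\<dots> = (\<Sum>i\<in>I. \<Sum>a\<in>A. \<Sum>s\<in>S. \<Sum>b\<in>B. h a b i s)"
    by (rule sum.cong[OF refl], rule sum.cong[OF refl], rule sum.swap)
  also have "\<dots> = (\<Sum>i\<in>I. \<Sum>s\<in>S. \<Sum>a\<in>A. \<Sum>b\<in>B. h a b i s)"
    by (rule sum.cong[OF refl], rule sum.swap)
  finally show ?thesis .
qed

lemma msum_index[simp]: "i < r \<Longrightarrow> j < c \<Longrightarrow> msum r c f I $$ (i,j) = (\<Sum>x\<in>I. f x $$ (i,j))"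
  unfolding msum_def by simp
lemma msum_dim[simp]: "dim_row (msum r c f I) = r" "dim_col (msum r c f I) = c"
  unfolding msum_def by simp_all
lemma msum_carrier[simp]: "msum r c f I \<in> carrier_mat r c"
  unfolding msum_def by simp
lemma adj_dim[simp]: "dim_row (adj A) = dim_col A" "dim_col (adj A) = dim_row A"
  unfolding adj_def by simp_all
lemma adj_index[simp]: "i < dim_col A \<Longrightarrow> j < dim_row A \<Longrightarrow> adj A $$ (i,j) = cnj (A $$ (j,i))"
  unfolding adj_def by simp
lemma projB_dim[simp]: "dim_row (projB d k j) = k*d" "dim_col (projB d k j) = k*d"
  unfolding projB_def by simp_all
lemma projB_index[simp]: "r < k*d \<Longrightarrow> c < k*d \<Longrightarrow> projB d k j $$ (r,c) = (if r = c \<and> r div d = j then 1 else 0)"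
  unfolding projB_def by simp

lemma trace_projB:
  assumes "X \<in> carrier_mat (k*d) (k*d)"
  shows "mtrace (X * projB d k j) = (\<Sum>s<k*d. X $$ (s,s) * (if s div d = j then 1 else 0))"
proof -
  have "mtrace (X * projB d k j) = (\<Sum>s<k*d. \<Sum>l<k*d. X $$ (s,l) * (if l = s \<and> l div d = j then 1 else 0))"
    unfolding mtrace_def using assms by (auto simp: scalar_prod_def intro!: sum.cong)
  also have "\<dots> = (\<Sum>s<k*d. X $$ (s,s) * (if s div d = j then 1 else 0))"
  proof (rule sum.cong[OF refl])
    fix s assume "s \<in> {..<k*d}"
    have "(\<Sum>l<k*d. X $$ (s,l) * (if l = s \<and> l div d = j then 1 else 0)) =
      (\<Sum>l<k*d. if l = s then X $$ (s,l) * (if l div d = j then 1 else 0) else 0)"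
      by (rule sum.cong, auto)
    also have "\<dots> = X $$ (s,s) * (if s div d = j then 1 else 0)" using \<open>s \<in> {..<k*d}\<close> by simp
    finally show "(\<Sum>l<k*d. X $$ (s,l) * (if l = s \<and> l div d = j then 1 else 0)) = X $$ (s,s) * (if s div d = j then 1 else 0)" .
  qed
  finally show ?thesis .
qed

definition ind :: "nat \<Rightarrow> nat \<Rightarrow> nat \<Rightarrow> complex" where
  "ind d j s = (if s div d = j then 1 else 0)"

lemma sum_ind:
  assumes "s < k*d"
  shows "(\<Sum>j<k. ind d j s) = 1"
proof -
  have "s div d < k" using assms by (metis less_mult_imp_div_less mult.commute)
  then show ?thesis unfolding ind_def by (simp add: sum.delta'[of "{..<k}" "s div d", simplified] eq_commute[of "_ div d"])
qed

lemma KrK_index: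
  assumes "A \<in> carrier_mat n d" "\<rho> \<in> carrier_mat d d" "s < n" "s' < n"
  shows "(A * \<rho> * adj A) $$ (s,s') = (\<Sum>a<d. \<Sum>b<d. A $$ (s,a) * \<rho> $$ (a,b) * cnj (A $$ (s',b)))"
proof -
  have "(A * \<rho> * adj A) $$ (s,s') = (\<Sum>b<d. (\<Sum>a<d. A $$ (s,a) * \<rho> $$ (a,b)) * cnj (A $$ (s',b)))"
    using assms by (simp add: scalar_prod_def atLeast0LessThan)
  also have "\<dots> = (\<Sum>b<d. \<Sum>a<d. A $$ (s,a) * \<rho> $$ (a,b) * cnj (A $$ (s',b)))"
    by (simp add: sum_distrib_right)
  also have "\<dots> = (\<Sum>a<d. \<Sum>b<d. A $$ (s,a) * \<rho> $$ (a,b) * cnj (A $$ (s',b)))" by (rule sum.swap)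
  finally show ?thesis .
qed

lemma kraus_diag:
  assumes "\<forall>i<N. K i \<in> carrier_mat n d" "\<rho> \<in> carrier_mat d d" "s < n" "s' < n"
  shows "kraus_map n N K \<rho> $$ (s,s') = (\<Sum>i<N. \<Sum>a<d. \<Sum>b<d. K i $$ (s,a) * \<rho> $$ (a,b) * cnj (K i $$ (s',b)))"
  unfolding kraus_map_def using assms by (auto intro!: sum.cong KrK_index)

lemma kraus_carrier[simp]: "kraus_map n N K \<rho> \<in> carrier_mat n n"
  unfolding kraus_map_def by simp

lemma channel_to_povm:
  assumes ch: "channel d (k*d) \<Phi>" and dens: "\<forall>j<k. \<rho> j \<in> carrier_mat d d"
  shows "\<exists>E. povm d k E \<and> (\<forall>j<k. mtrace (\<Phi> (\<rho> j) * projB d k j) = mtrace (E j * \<rho> j))"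
proof -
  define n where "n = k*d"
  obtain N K where kr: "is_kraus d n N K" and phi: "\<forall>\<rho>\<in>carrier_mat d d. \<Phi> \<rho> = kraus_map n N K \<rho>"
    using ch unfolding channel_def n_def by blast
  have Kc: "\<forall>i<N. K i \<in> carrier_mat n d" using kr unfolding is_kraus_def by blast
  have Kdim: "dim_row (K i) = n" "dim_col (K i) = d" if "i < N" for i using Kc that by auto
  have KK: "msum d d (\<lambda>i. adj (K i) * K i) {..<N} = 1\<^sub>m d" using kr unfolding is_kraus_def by blast
  define E where "E j = mat d d (\<lambda>(a,b). \<Sum>i<N. \<Sum>s<n. cnj (K i $$ (s,a)) * K i $$ (s,b) * ind d j s)" for j
  have Eidx: "E j $$ (a,b) = (\<Sum>i<N. \<Sum>s<n. cnj (K i $$ (s,a)) * K i $$ (s,b) * ind d j s)" if "a < d" "b < d" for j a b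
    unfolding E_def using that by simp
  have Ec: "E j \<in> carrier_mat d d" for j unfolding E_def by simp
  have val: "mtrace (\<Phi> (\<rho> j) * projB d k j) = mtrace (E j * \<rho> j)" if j: "j < k" for j
  proof -
    have rc: "\<rho> j \<in> carrier_mat d d" using dens j by blast
    have "mtrace (\<Phi> (\<rho> j) * projB d k j) = mtrace (kraus_map n N K (\<rho> j) * projB d k j)"
      using phi rc by simp
    also have "\<dots> = (\<Sum>s<n. kraus_map n N K (\<rho> j) $$ (s,s) * ind d j s)"
      unfolding n_def ind_def by (rule trace_projB) simp
    also have "\<dots> = (\<Sum>s<n. \<Sum>i<N. \<Sum>a<d. \<Sum>b<d. K i $$ (s,a) * \<rho> j $$ (a,b) * cnj (K i $$ (s,b)) * ind d j s)"
      by (rule sum.cong[OF refl], simp add: kraus_diag[OF Kc rc] sum_distrib_right)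
    also have "\<dots> = (\<Sum>i<N. \<Sum>s<n. \<Sum>a<d. \<Sum>b<d. K i $$ (s,a) * \<rho> j $$ (a,b) * cnj (K i $$ (s,b)) * ind d j s)"
      by (rule sum.swap)
    finally have L: "mtrace (\<Phi> (\<rho> j) * projB d k j) = \<dots>" .
    have "mtrace (E j * \<rho> j) = (\<Sum>a<d. \<Sum>b<d. E j $$ (a,b) * \<rho> j $$ (b,a))"
      unfolding mtrace_def using rc Ec[of j] by (simp add: scalar_prod_def atLeast0LessThan)
    also have "\<dots> = (\<Sum>b<d. \<Sum>a<d. E j $$ (a,b) * \<rho> j $$ (b,a))" by (rule sum.swap)
    also have "\<dots> = (\<Sum>a<d. \<Sum>b<d. \<Sum>i<N. \<Sum>s<n. K i $$ (s,a) * \<rho> j $$ (a,b) * cnj (K i $$ (s,b)) * ind d j s)"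
      by (rule sum.cong[OF refl], rule sum.cong[OF refl], simp add: Eidx sum_distrib_right sum_distrib_left mult_ac)
    also have "\<dots> = (\<Sum>i<N. \<Sum>s<n. \<Sum>a<d. \<Sum>b<d. K i $$ (s,a) * \<rho> j $$ (a,b) * cnj (K i $$ (s,b)) * ind d j s)"
      by (rule sum_swap4)
    finally show ?thesis using L by simp
  qed
  have psdE: "psd d (E j)" for j
    unfolding psd_iff psdf_def
  proof (rule conjI[OF Ec], rule allI)
    fix v :: "nat \<Rightarrow> complex"
    define z where "z i s = (\<Sum>a<d. K i $$ (s,a) * v a)" for i s
    have "qf d (\<lambda>a b. E j $$ (a,b)) v = (\<Sum>a<d. \<Sum>b<d. \<Sum>i<N. \<Sum>s<n. cnj (v a) * cnj (K i $$ (s,a)) * K i $$ (s,b) * ind d j s * v b)"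
      unfolding qf_def by (rule sum.cong[OF refl], rule sum.cong[OF refl], simp add: Eidx sum_distrib_right sum_distrib_left mult_ac)
    also have "\<dots> = (\<Sum>i<N. \<Sum>s<n. \<Sum>a<d. \<Sum>b<d. cnj (v a) * cnj (K i $$ (s,a)) * K i $$ (s,b) * ind d j s * v b)"
      by (rule sum_swap4)
    also have "\<dots> = (\<Sum>i<N. \<Sum>s<n. of_real (if s div d = j then (cmod (z i s))^2 else 0))"
    proof (rule sum.cong[OF refl], rule sum.cong[OF refl])
      fix i s
      have "(\<Sum>a<d. \<Sum>b<d. cnj (v a) * cnj (K i $$ (s,a)) * K i $$ (s,b) * ind d j s * v b) = ind d j s * (cnj (z i s) * z i s)"
      proof -
        have "ind d j s * (cnj (z i s) * z i s) = (\<Sum>a<d. \<Sum>b<d. ind d j s * (cnj (K i $$ (s,a) * v a) * (K i $$ (s,b) * v b)))"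
          unfolding z_def cnj_sum sum_product unfolding sum_distrib_left ..
        also have "\<dots> = (\<Sum>a<d. \<Sum>b<d. cnj (v a) * cnj (K i $$ (s,a)) * K i $$ (s,b) * ind d j s * v b)"
          by (rule sum.cong[OF refl], rule sum.cong[OF refl], simp add: mult_ac)
        finally show ?thesis ..
      qed
      also have "\<dots> = of_real (if s div d = j then (cmod (z i s))^2 else 0)"
      proof -
        have cz: "cnj (z i s) * z i s = of_real ((cmod (z i s))^2)"
          by (metis complex_norm_square mult.commute)
        show ?thesis unfolding cz ind_def by simp
      qed
      finally show "(\<Sum>a<d. \<Sum>b<d. cnj (v a) * cnj (K i $$ (s,a)) * K i $$ (s,b) * ind d j s * v b) = of_real (if s div d = j then (cmod (z i s))^2 else 0)" .
    qed
    finally have q: "qf d (\<lambda>a b. E j $$ (a,b)) v = of_real (\<Sum>i<N. \<Sum>s<n. (if s div d = j then (cmod (z i s))^2 else 0))"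
      by simp
    show "Im (qf d (\<lambda>a b. E j $$ (a,b)) v) = 0 \<and> 0 \<le> Re (qf d (\<lambda>a b. E j $$ (a,b)) v)"
      unfolding q by (auto intro!: sum_nonneg)
  qed
  have sumE: "msum d d E {..<k} = 1\<^sub>m d"
  proof (rule eq_matI)
    fix a b assume ab: "a < dim_row (1\<^sub>m d)" "b < dim_col (1\<^sub>m d)"
    then have a: "a < d" and b: "b < d" by auto
    have "msum d d E {..<k} $$ (a,b) = (\<Sum>j<k. \<Sum>i<N. \<Sum>s<n. cnj (K i $$ (s,a)) * K i $$ (s,b) * ind d j s)"
      using a b by (simp add: Eidx)
    also have "\<dots> = (\<Sum>i<N. \<Sum>j<k. \<Sum>s<n. cnj (K i $$ (s,a)) * K i $$ (s,b) * ind d j s)" by (rule sum.swap)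
    also have "\<dots> = (\<Sum>i<N. \<Sum>s<n. \<Sum>j<k. cnj (K i $$ (s,a)) * K i $$ (s,b) * ind d j s)"
      by (rule sum.cong[OF refl], rule sum.swap)
    also have "\<dots> = (\<Sum>i<N. \<Sum>s<n. cnj (K i $$ (s,a)) * K i $$ (s,b))"
      by (rule sum.cong[OF refl], rule sum.cong[OF refl], simp add: sum_distrib_left[symmetric] sum_ind n_def)
    also have "\<dots> = msum d d (\<lambda>i. adj (K i) * K i) {..<N} $$ (a,b)"
      using a b by (auto simp: Kdim scalar_prod_def intro!: sum.cong)
    also have "\<dots> = 1\<^sub>m d $$ (a,b)" using KK by simp
    finally show "msum d d E {..<k} $$ (a,b) = 1\<^sub>m d $$ (a,b)" .
  qed auto
  show ?thesis
    by (rule exI[of _ E], auto simp: povm_def psdE sumE val)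
qed

lemma sum_divmod:
  "(\<Sum>i<k*(d::nat). f (i div d) (i mod d)) = (\<Sum>j<k. \<Sum>r<d. (f j r :: complex))"
proof -
  have "(\<Sum>i<k*d. f (i div d) (i mod d)) = (\<Sum>m<k. \<Sum>i\<in>{m*d..<m*d+d}. f (i div d) (i mod d))"
    by (rule sum.nat_group[symmetric])
  also have "\<dots> = (\<Sum>j<k. \<Sum>r<d. f j r)"
  proof (rule sum.cong[OF refl])
    fix m
    have "(\<Sum>i\<in>{m*d..<m*d+d}. f (i div d) (i mod d)) = (\<Sum>i\<in>{0+m*d..<d+m*d}. f (i div d) (i mod d))"
      by (simp add: add.commute)
    also have "\<dots> = (\<Sum>r\<in>{0..<d}. f ((r + m*d) div d) ((r + m*d) mod d))"
      by (rule sum.shift_bounds_nat_ivl)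
    also have "\<dots> = (\<Sum>r<d. f m r)"
      by (rule sum.cong, auto)
    finally show "(\<Sum>i\<in>{m*d..<m*d+d}. f (i div d) (i mod d)) = (\<Sum>r<d. f m r)" .
  qed
  finally show ?thesis .
qed

lemma sum_swap3:
  "(\<Sum>a\<in>A. \<Sum>b\<in>B. \<Sum>c\<in>C. h a b c) = (\<Sum>c\<in>C. \<Sum>a\<in>A. \<Sum>b\<in>B. h a b c)"
proof -
  have "(\<Sum>a\<in>A. \<Sum>b\<in>B. \<Sum>c\<in>C. h a b c) = (\<Sum>a\<in>A. \<Sum>c\<in>C. \<Sum>b\<in>B. h a b c)"
    by (rule sum.cong[OF refl], rule sum.swap)
  also have "\<dots> = (\<Sum>c\<in>C. \<Sum>a\<in>A. \<Sum>b\<in>B. h a b c)" by (rule sum.swap)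
  finally show ?thesis .
qed

lemma psdf_diagonal:
  assumes "\<And>s. s < n \<Longrightarrow> Im (D s s) = 0 \<and> 0 \<le> Re (D s s)"
    and "\<And>s s'. s < n \<Longrightarrow> s' < n \<Longrightarrow> s \<noteq> s' \<Longrightarrow> D s s' = 0"
  shows "psdf n D"
  unfolding psdf_def
proof
  fix v :: "nat \<Rightarrow> complex"
  have "qf n D v = (\<Sum>a<n. cnj (v a) * D a a * v a)"
    unfolding qf_def
  proof (rule sum.cong[OF refl])
    fix a assume a: "a \<in> {..<n}"
    have "(\<Sum>b<n. cnj (v a) * D a b * v b) = (\<Sum>b<n. if b = a then cnj (v a) * D a b * v b else 0)"
      using a by (intro sum.cong refl, auto simp: assms(2))
    also have "\<dots> = cnj (v a) * D a a * v a" using a by simp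
    finally show "(\<Sum>b<n. cnj (v a) * D a b * v b) = cnj (v a) * D a a * v a" .
  qed
  also have "\<dots> = of_real (\<Sum>a<n. (cmod (v a))^2 * Re (D a a))"
    unfolding of_real_sum
  proof (rule sum.cong[OF refl])
    fix a assume a: "a \<in> {..<n}"
    have Da: "D a a = of_real (Re (D a a))" using assms(1)[of a] a by (simp add: complex_eq_iff)
    have cz: "cnj (v a) * v a = of_real ((cmod (v a))^2)"
      by (metis complex_norm_square mult.commute)
    have "cnj (v a) * D a a * v a = (cnj (v a) * v a) * D a a" by (simp add: mult_ac)
    also have "\<dots> = of_real ((cmod (v a))^2 * Re (D a a))" unfolding cz by (subst Da, simp)
    finally show "cnj (v a) * D a a * v a = of_real ((cmod (v a))^2 * Re (D a a))" .
  qed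
  finally have q: "qf n D v = of_real (\<Sum>a<n. (cmod (v a))^2 * Re (D a a))" .
  show "Im (qf n D v) = 0 \<and> 0 \<le> Re (qf n D v)"
    unfolding q using assms(1) by (auto intro!: sum_nonneg)
qed

lemma povm_to_free:
  assumes pv: "povm d k E" and dens: "\<forall>j<k. \<rho> j \<in> carrier_mat d d"
  shows "\<exists>\<Phi>. IO d (k*d) \<Phi> \<and> MIO d (k*d) \<Phi> \<and> (\<forall>j<k. mtrace (\<Phi> (\<rho> j) * projB d k j) = mtrace (E j * \<rho> j))"
proof -
  define n where "n = k*d"
  have "\<forall>j. \<exists>w. j < k \<longrightarrow> (\<forall>a<d. \<forall>b<d. E j $$ (a,b) = (\<Sum>r<d. w r a * cnj (w r b)))"
    using pv psd_decomp unfolding povm_def by blast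
  then obtain W where W: "\<And>j a b. j < k \<Longrightarrow> a < d \<Longrightarrow> b < d \<Longrightarrow> E j $$ (a,b) = (\<Sum>r<d. W j r a * cnj (W j r b))"
    by metis
  have sumE: "msum d d E {..<k} = 1\<^sub>m d" using pv unfolding povm_def by blast
  define w where "w i = W (i div d) (i mod d)" for i
  define K where "K i = mat n d (\<lambda>(s,a). if s = i then cnj (w i a) else 0)" for i
  have Kc: "\<forall>i<n. K i \<in> carrier_mat n d" unfolding K_def by simp
  have Kdim[simp]: "dim_row (K i) = n" "dim_col (K i) = d" for i unfolding K_def by simp_all
  have Kidx: "K i $$ (s,a) = (if s = i then cnj (w i a) else 0)" if "s < n" "a < d" for i s a
    unfolding K_def using that by simp
  have WW: "(\<Sum>i<n. w i a * cnj (w i b)) = (if a = b then 1 else 0)" if ab: "a < d" "b < d" for a b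
  proof -
    have "(\<Sum>i<n. w i a * cnj (w i b)) = (\<Sum>j<k. \<Sum>r<d. W j r a * cnj (W j r b))"
      unfolding n_def w_def by (rule sum_divmod)
    also have "\<dots> = (\<Sum>j<k. E j $$ (a,b))" using W ab by simp
    also have "\<dots> = msum d d E {..<k} $$ (a,b)" using ab by simp
    also have "\<dots> = (if a = b then 1 else 0)" using sumE ab by simp
    finally show ?thesis .
  qed
  have kr: "is_kraus d n n K"
    unfolding is_kraus_def
  proof (intro conjI Kc)
    show "msum d d (\<lambda>i. adj (K i) * K i) {..<n} = 1\<^sub>m d"
    proof (rule eq_matI)
      fix a b assume "a < dim_row (1\<^sub>m d)" "b < dim_col (1\<^sub>m d)"
      then have a: "a < d" and b: "b < d" by auto
      have "msum d d (\<lambda>i. adj (K i) * K i) {..<n} $$ (a,b) = (\<Sum>i<n. \<Sum>s<n. cnj (K i $$ (s,a)) * K i $$ (s,b))"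
        using a b by (auto simp: scalar_prod_def atLeast0LessThan intro!: sum.cong)
      also have "\<dots> = (\<Sum>i<n. w i a * cnj (w i b))"
      proof (rule sum.cong[OF refl])
        fix i assume i: "i \<in> {..<n}"
        have "(\<Sum>s<n. cnj (K i $$ (s,a)) * K i $$ (s,b)) = (\<Sum>s<n. if s = i then w i a * cnj (w i b) else 0)"
          using a b by (intro sum.cong refl, simp add: Kidx)
        also have "\<dots> = w i a * cnj (w i b)" using i by simp
        finally show "(\<Sum>s<n. cnj (K i $$ (s,a)) * K i $$ (s,b)) = w i a * cnj (w i b)" .
      qed
      also have "\<dots> = 1\<^sub>m d $$ (a,b)" using WW a b by simp
      finally show "msum d d (\<lambda>i. adj (K i) * K i) {..<n} $$ (a,b) = 1\<^sub>m d $$ (a,b)" .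
    qed auto
  qed
  define \<Phi> where "\<Phi> = kraus_map n n K"
  have Phi_idx: "\<Phi> \<rho>' $$ (s,s') = (if s = s' then qf d (\<lambda>a b. \<rho>' $$ (a,b)) (w s) else 0)"
    if r: "\<rho>' \<in> carrier_mat d d" and s: "s < n" "s' < n" for \<rho>' s s'
  proof -
    have "\<Phi> \<rho>' $$ (s,s') = (\<Sum>i<n. \<Sum>a<d. \<Sum>b<d. K i $$ (s,a) * \<rho>' $$ (a,b) * cnj (K i $$ (s',b)))"
      unfolding \<Phi>_def by (rule kraus_diag[OF Kc r s])
    also have "\<dots> = (\<Sum>i<n. if i = s then (if s = s' then qf d (\<lambda>a b. \<rho>' $$ (a,b)) (w s) else 0) else 0)"
    proof (rule sum.cong[OF refl])
      fix i assume i: "i \<in> {..<n}"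
      show "(\<Sum>a<d. \<Sum>b<d. K i $$ (s,a) * \<rho>' $$ (a,b) * cnj (K i $$ (s',b))) =
        (if i = s then (if s = s' then qf d (\<lambda>a b. \<rho>' $$ (a,b)) (w s) else 0) else 0)"
        using s by (auto simp: Kidx qf_def intro!: sum.neutral)
    qed
    also have "\<dots> = (if s = s' then qf d (\<lambda>a b. \<rho>' $$ (a,b)) (w s) else 0)" using s by simp
    finally show ?thesis .
  qed
  have IO: "IO d n \<Phi>"
    unfolding IO_def
  proof (intro exI conjI)
    show "is_kraus d n n K" by (rule kr)
    show "\<forall>\<rho>\<in>carrier_mat d d. \<Phi> \<rho> = kraus_map n n K \<rho>" unfolding \<Phi>_def by simp
    show "\<forall>i<n. \<forall>\<rho>. incoherent d \<rho> \<longrightarrow> diagonal_mat (K i * \<rho> * adj (K i))"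
    proof (intro allI impI)
      fix i \<rho>' assume i: "i < n" and inc: "incoherent d \<rho>'"
      have rc: "\<rho>' \<in> carrier_mat d d" using inc unfolding incoherent_def density_def psd_def by blast
      show "diagonal_mat (K i * \<rho>' * adj (K i))"
        unfolding diagonal_mat_def
      proof (intro allI impI)
        fix s s' assume "s < dim_row (K i * \<rho>' * adj (K i))" "s' < dim_col (K i * \<rho>' * adj (K i))" "s \<noteq> s'"
        then have s: "s < n" "s' < n" "s \<noteq> s'" using Kc i by auto
        show "(K i * \<rho>' * adj (K i)) $$ (s,s') = 0"
          using s Kc i rc by (subst KrK_index[of _ n d], auto simp: Kidx intro!: sum.neutral)
      qed
    qed
  qed
  have MIO: "MIO d n \<Phi>"
    unfolding MIO_def
  proof (intro conjI allI impI)
    show "channel d n \<Phi>" unfolding channel_def \<Phi>_def using kr by blast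
    fix \<rho>' assume inc: "incoherent d \<rho>'"
    have rc: "\<rho>' \<in> carrier_mat d d" using inc unfolding incoherent_def density_def psd_def by blast
    have pr: "psdf d (\<lambda>a b. \<rho>' $$ (a,b))" using inc unfolding incoherent_def density_def psd_iff by blast
    have tr: "mtrace \<rho>' = 1" using inc unfolding incoherent_def density_def by blast
    have Pc: "\<Phi> \<rho>' \<in> carrier_mat n n" unfolding \<Phi>_def by simp
    have diag: "diagonal_mat (\<Phi> \<rho>')"
      unfolding diagonal_mat_def using Pc by (auto simp: Phi_idx[OF rc])
    have psdP: "psd n (\<Phi> \<rho>')"
      unfolding psd_iff
    proof (rule conjI[OF Pc], rule psdf_diagonal)
      fix s assume s: "s < n"
      show "Im (\<Phi> \<rho>' $$ (s,s)) = 0 \<and> 0 \<le> Re (\<Phi> \<rho>' $$ (s,s))"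
        using pr s unfolding psdf_def by (simp add: Phi_idx[OF rc])
    next
      fix s s' assume "s < n" "s' < n" "s \<noteq> s'"
      then show "\<Phi> \<rho>' $$ (s,s') = 0" by (simp add: Phi_idx[OF rc])
    qed
    have "mtrace (\<Phi> \<rho>') = (\<Sum>s<n. \<Sum>a<d. \<Sum>b<d. cnj (w s a) * \<rho>' $$ (a,b) * w s b)"
      unfolding mtrace_def using Pc by (auto simp: Phi_idx[OF rc] qf_def)
    also have "\<dots> = (\<Sum>a<d. \<Sum>b<d. \<Sum>s<n. cnj (w s a) * \<rho>' $$ (a,b) * w s b)"
      by (rule sum_swap3[symmetric])
    also have "\<dots> = (\<Sum>a<d. \<Sum>b<d. \<rho>' $$ (a,b) * (if b = a then 1 else 0))"
    proof (rule sum.cong[OF refl], rule sum.cong[OF refl])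
      fix a b assume "a \<in> {..<d}" "b \<in> {..<d}"
      then have "(\<Sum>s<n. w s b * cnj (w s a)) = (if b = a then 1 else 0)" using WW by simp
      moreover have "(\<Sum>s<n. cnj (w s a) * \<rho>' $$ (a,b) * w s b) = (\<Sum>s<n. w s b * cnj (w s a)) * \<rho>' $$ (a,b)"
        unfolding sum_distrib_right by (rule sum.cong[OF refl], simp add: mult_ac)
      ultimately show "(\<Sum>s<n. cnj (w s a) * \<rho>' $$ (a,b) * w s b) = \<rho>' $$ (a,b) * (if b = a then 1 else 0)"
        by simp
    qed
    also have "\<dots> = mtrace \<rho>'" unfolding mtrace_def using rc by (simp add: if_distrib cong: if_cong)
    finally have "mtrace (\<Phi> \<rho>') = 1" using tr by simp
    then show "incoherent n (\<Phi> \<rho>')" unfolding incoherent_def density_def using psdP diag by blast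
  qed
  have val: "mtrace (\<Phi> (\<rho> j) * projB d k j) = mtrace (E j * \<rho> j)" if j: "j < k" for j
  proof -
    have rc: "\<rho> j \<in> carrier_mat d d" using dens j by blast
    have Pc: "\<Phi> (\<rho> j) \<in> carrier_mat (k*d) (k*d)" unfolding \<Phi>_def n_def by simp
    have "mtrace (\<Phi> (\<rho> j) * projB d k j) = (\<Sum>s<k*d. \<Phi> (\<rho> j) $$ (s,s) * ind d j s)"
      unfolding ind_def using Pc by (rule trace_projB)
    also have "\<dots> = (\<Sum>s<k*d. (\<lambda>j' r. qf d (\<lambda>a b. \<rho> j $$ (a,b)) (W j' r) * (if j' = j then 1 else 0)) (s div d) (s mod d))"
      by (rule sum.cong[OF refl], simp add: Phi_idx[OF rc] n_def ind_def w_def)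
    also have "\<dots> = (\<Sum>j'<k. \<Sum>r<d. qf d (\<lambda>a b. \<rho> j $$ (a,b)) (W j' r) * (if j' = j then 1 else 0))"
      by (rule sum_divmod)
    also have "\<dots> = (\<Sum>r<d. qf d (\<lambda>a b. \<rho> j $$ (a,b)) (W j r))"
    proof -
      have "(\<Sum>j'<k. \<Sum>r<d. qf d (\<lambda>a b. \<rho> j $$ (a,b)) (W j' r) * (if j' = j then 1 else 0)) =
        (\<Sum>j'<k. if j' = j then (\<Sum>r<d. qf d (\<lambda>a b. \<rho> j $$ (a,b)) (W j r)) else 0)"
        by (rule sum.cong[OF refl], simp)
      also have "\<dots> = (\<Sum>r<d. qf d (\<lambda>a b. \<rho> j $$ (a,b)) (W j r))" using j by simp
      finally show ?thesis .
    qed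
    also have "\<dots> = (\<Sum>r<d. \<Sum>a<d. \<Sum>b<d. W j r b * cnj (W j r a) * \<rho> j $$ (a,b))"
      unfolding qf_def by (simp add: mult_ac)
    finally have L: "mtrace (\<Phi> (\<rho> j) * projB d k j) = \<dots>" .
    have "mtrace (E j * \<rho> j) = (\<Sum>a<d. \<Sum>b<d. E j $$ (a,b) * \<rho> j $$ (b,a))"
    proof -
      have Ec: "E j \<in> carrier_mat d d" using pv j unfolding povm_def psd_iff by blast
      show ?thesis unfolding mtrace_def using rc Ec by (simp add: scalar_prod_def atLeast0LessThan)
    qed
    also have "\<dots> = (\<Sum>b<d. \<Sum>a<d. E j $$ (a,b) * \<rho> j $$ (b,a))" by (rule sum.swap)
    also have "\<dots> = (\<Sum>a<d. \<Sum>b<d. \<Sum>r<d. W j r b * cnj (W j r a) * \<rho> j $$ (a,b))"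
      by (rule sum.cong[OF refl], rule sum.cong[OF refl], simp add: W j sum_distrib_right)
    also have "\<dots> = (\<Sum>r<d. \<Sum>a<d. \<Sum>b<d. W j r b * cnj (W j r a) * \<rho> j $$ (a,b))"
      by (rule sum_swap3)
    finally show ?thesis using L by simp
  qed
  show ?thesis using IO MIO val unfolding n_def by blast
qed

theorem proposition1:
  fixes d k :: nat and p :: "nat \<Rightarrow> real" and \<rho> :: "nat \<Rightarrow> complex mat"
  assumes "d \<ge> 1"
    and "ensemble d k p \<rho>"
  shows "Psuc d k p \<rho> = Ptilde IO d k p \<rho> \<and> Ptilde IO d k p \<rho> = Ptilde MIO d k p \<rho>"
proof -
  have dens: "\<forall>j<k. \<rho> j \<in> carrier_mat d d"
    using assms(2) unfolding ensemble_def density_def psd_def by blast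
  define SP where "SP = {(\<Sum>j<k. p j * Re (mtrace (E j * \<rho> j))) | E. povm d k E}"
  define S where "S F = {(\<Sum>j<k. p j * Re (mtrace (\<Phi> (\<rho> j) * projB d k j))) | \<Phi>. F d (k*d) \<Phi>}"
    for F :: "nat \<Rightarrow> nat \<Rightarrow> (complex mat \<Rightarrow> complex mat) \<Rightarrow> bool"
  have sub: "S F \<subseteq> SP" if F: "\<And>\<Phi>. F d (k*d) \<Phi> \<Longrightarrow> channel d (k*d) \<Phi>" for F
  proof
    fix x assume "x \<in> S F"
    then obtain \<Phi> where x: "x = (\<Sum>j<k. p j * Re (mtrace (\<Phi> (\<rho> j) * projB d k j)))" and FP: "F d (k*d) \<Phi>"
      unfolding S_def by blast
    obtain E where pv: "povm d k E" and eq: "\<forall>j<k. mtrace (\<Phi> (\<rho> j) * projB d k j) = mtrace (E j * \<rho> j)"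
      using channel_to_povm[OF F[OF FP] dens] by blast
    have "x = (\<Sum>j<k. p j * Re (mtrace (E j * \<rho> j)))" unfolding x using eq by simp
    then show "x \<in> SP" unfolding SP_def using pv by blast
  qed
  have IOch: "channel d (k*d) \<Phi>" if "IO d (k*d) \<Phi>" for \<Phi>
    using that unfolding IO_def channel_def by blast
  have MIOch: "channel d (k*d) \<Phi>" if "MIO d (k*d) \<Phi>" for \<Phi>
    using that unfolding MIO_def by blast
  have sup1: "SP \<subseteq> S IO" and sup2: "SP \<subseteq> S MIO"
  proof -
    have "x \<in> S IO \<and> x \<in> S MIO" if "x \<in> SP" for x
    proof -
      obtain E where x: "x = (\<Sum>j<k. p j * Re (mtrace (E j * \<rho> j)))" and pv: "povm d k E"
        using \<open>x \<in> SP\<close> unfolding SP_def by blast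
      obtain \<Phi> where io: "IO d (k*d) \<Phi>" and mio: "MIO d (k*d) \<Phi>"
        and eq: "\<forall>j<k. mtrace (\<Phi> (\<rho> j) * projB d k j) = mtrace (E j * \<rho> j)"
        using povm_to_free[OF pv dens] by blast
      have "x = (\<Sum>j<k. p j * Re (mtrace (\<Phi> (\<rho> j) * projB d k j)))" unfolding x using eq by simp
      then show ?thesis unfolding S_def using io mio by blast
    qed
    then show "SP \<subseteq> S IO" "SP \<subseteq> S MIO" by auto
  qed
  have e1: "SP = S IO" using sub[OF IOch] sup1 by blast
  have e2: "SP = S MIO" using sub[OF MIOch] sup2 by blast
  have P: "Psuc d k p \<rho> = Sup SP" unfolding Psuc_def SP_def ..
  have T: "Ptilde F d k p \<rho> = Sup (S F)" for F unfolding Ptilde_def S_def ..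
  show ?thesis unfolding P T e1[symmetric] e2[symmetric] by simp
qed


end
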